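(* Let $S$ be the output of Algorithm 1 and let $\epsilon>0$. For each $c\in C$, \[ \Pr\left[f_c(S)\le\left(1-\frac1e-\epsilon\right)\mathrm{OPT}\right]\;\le\;\exp\left(-\frac{\epsilon^2\,\mathrm{OPT}}{4M_c}\right), \] where $M_c=\max_{v\in V} f_c(v\mid\emptyset)$ (assumed positive).
   Context: Setup: $V$ is a finite nonempty ground set, $C$ is a finite nonempty set of "colors", $k=|C|$. For each $c\in C$, $f_c\colon 2^V\to\mathbb{R}_{\ge 0}$ is monotone and submodular. $B$ is a positive integer (the budget). $f(T\mid S)=f(S\cup T)-f(S)$ and $f(v\mid S)=f(\{v\}\mid S)$. $\mathrm{OPT}=\max_{S\subseteq V,\,|S|\le B}\min_{c\in C} f_c(S)$. $\Delta_V$ is the probability simplex over $V$. Algorithm 1 (assumes $\mathrm{OPT}$ known): set $S^{(0)}=\emptyset$; for $i=1,\dots,B$: choose any $x^{(i)}\in\Delta_V$ (the choice may depend arbitrarily on the history) such that $\sum_{v\in V}x^{(i)}_v f_c(v\mid S^{(i-1)})\ge \frac1B(\mathrm{OPT}-f_c(S^{(i-1)}))$ for all $c\in C$ (such $x^{(i)}$ always exists); sample $v^{(i)}\sim x^{(i)}$ using fresh randomness; set $S^{(i)}=S^{(i-1)}\cup\{v^{(i)}\}$. Output $S^{(B)}$. *)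

theory Defs
  imports "HOL-Probability.Probability"
begin

definition marg :: "('v set \<Rightarrow> real) \<Rightarrow> 'v set \<Rightarrow> 'v set \<Rightarrow> real" where
  "marg f T S = f (S \<union> T) - f S"

definition monotone_set_fun :: "'v set \<Rightarrow> ('v set \<Rightarrow> real) \<Rightarrow> bool" where
  "monotone_set_fun V f \<longleftrightarrow> (\<forall>A B. A \<subseteq> B \<and> B \<subseteq> V \<longrightarrow> f A \<le> f B)"

definition submodular :: "'v set \<Rightarrow> ('v set \<Rightarrow> real) \<Rightarrow> bool" where
  "submodular V f \<longleftrightarrow> (\<forall>A B. A \<subseteq> V \<and> B \<subseteq> V \<longrightarrow> f (A \<union> B) + f (A \<inter> B) \<le> f A + f B)"

definition OPT :: "'v set \<Rightarrow> 'c set \<Rightarrow> ('c \<Rightarrow> 'v set \<Rightarrow> real) \<Rightarrow> nat \<Rightarrow> real" where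
  "OPT V C f B = Max ((\<lambda>S. Min ((\<lambda>c. f c S) ` C)) ` {S. S \<subseteq> V \<and> card S \<le> B})"

text \<open>The strategy x i h gives the distribution
  x^(i+1) used in step i+1 (0-indexed i), as a function of the history h = [v^(1),...,v^(i)]
  of previously sampled elements. alg_hist returns the distribution of the history after n steps.\<close>
primrec alg_hist :: "(nat \<Rightarrow> 'v list \<Rightarrow> 'v pmf) \<Rightarrow> nat \<Rightarrow> 'v list pmf" where
  "alg_hist x 0 = return_pmf []"
| "alg_hist x (Suc i) = bind_pmf (alg_hist x i) (\<lambda>h. map_pmf (\<lambda>v. h @ [v]) (x i h))"

definition alg_output :: "(nat \<Rightarrow> 'v list \<Rightarrow> 'v pmf) \<Rightarrow> nat \<Rightarrow> 'v set pmf" where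
  "alg_output x B = map_pmf set (alg_hist x B)"

definition valid_strategy ::
  "'v set \<Rightarrow> 'c set \<Rightarrow> ('c \<Rightarrow> 'v set \<Rightarrow> real) \<Rightarrow> nat \<Rightarrow> real \<Rightarrow> (nat \<Rightarrow> 'v list \<Rightarrow> 'v pmf) \<Rightarrow> bool" where
  "valid_strategy V C f B opt x \<longleftrightarrow>
     (\<forall>i h. i < B \<and> length h = i \<and> set h \<subseteq> V \<longrightarrow>
        set_pmf (x i h) \<subseteq> V \<and>
        (\<forall>c\<in>C. (\<Sum>v\<in>V. pmf (x i h) v * marg (f c) {v} (set h)) \<ge> (opt - f c (set h)) / real B))"

end

theory Submission
  imports Defs
begin

lemma exp_neg_quad: fixes y :: real assumes "y \<ge> 0" shows "exp (-y) \<le> 1 - y + y^2/2"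
proof -
  define g where "g = (\<lambda>y::real. 1 - y + y^2/2 - exp (-y))"
  have d: "\<And>t. (g has_real_derivative (-1 + t + exp (-t))) (at t)"
    unfolding g_def by (auto intro!: derivative_eq_intros simp: power2_eq_square)
  have "g 0 \<le> g y"
  proof (rule DERIV_nonneg_imp_nondecreasing[OF assms])
    fix t assume "0 \<le> t" "t \<le> y"
    show "\<exists>d. (g has_real_derivative d) (at t) \<and> 0 \<le> d"
      using d exp_ge_add_one_self[of "-t"] by (intro exI[of _ "-1 + t + exp (-t)"]) auto
  qed
  then show ?thesis by (simp add: g_def)
qed

lemma exp_convex_bound: fixes s M z :: real assumes "s \<ge> 0" "M > 0" "0 \<le> z" "z \<le> M"
  shows "exp (- s * z) \<le> 1 - z / M * (1 - exp (- s * M))"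
proof -
  define t where "t = z / M"
  have t: "0 \<le> t" "t \<le> 1" using assms by (auto simp: t_def)
  have "exp ((1 - t) *\<^sub>R 0 + t *\<^sub>R (- s * M)) \<le> (1 - t) * exp 0 + t * exp (- s * M)"
    using convex_onD[OF exp_convex, of t 0 "- s * M"] t by auto
  moreover have "(1 - t) *\<^sub>R 0 + t *\<^sub>R (- s * M) = - s * z" using assms by (simp add: t_def)
  ultimately show ?thesis by (simp add: t_def algebra_simps)
qed

lemma q_pow: fixes B :: nat assumes "B > 0" shows "(1 - 1 / real B) ^ B \<le> exp (-1)"
proof -
  have "1 - 1 / real B \<le> exp (- (1 / real B))" using exp_ge_add_one_self[of "- (1/real B)"] by simp
  moreover have "0 \<le> 1 - 1 / real B" using assms by (simp add: field_simps)
  ultimately have "(1 - 1 / real B) ^ B \<le> exp (- (1 / real B)) ^ B" by (rule power_mono)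
  also have "\<dots> = exp (-1)" using assms by (simp add: exp_of_nat_mult[symmetric])
  finally show ?thesis .
qed

lemma step_bound:
  fixes V :: "'v set" and p :: "'v pmf" and X :: "'v \<Rightarrow> real"
  assumes V: "finite V" and sp: "set_pmf p \<subseteq> V" and X: "\<And>v. v \<in> V \<Longrightarrow> 0 \<le> X v \<and> X v \<le> M"
    and M: "M > 0" and nu: "\<nu> \<le> (\<Sum>v\<in>V. pmf p v * X v)" "\<nu> \<le> K" and K: "0 \<le> K"
    and s: "0 \<le> s" "s \<le> l"
  shows "(\<Sum>v\<in>V. pmf p v * exp (- s * (X v - \<nu>))) \<le> exp (l^2 * M * K / 2)"
proof -
  define a where "a = 1 - exp (- s * M)"
  define \<mu> where "\<mu> = (\<Sum>v\<in>V. pmf p v * X v)"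
  have a0: "0 \<le> a" using s M by (simp add: a_def mult_nonneg_nonneg)
  have aub: "a \<le> s * M" using exp_ge_add_one_self[of "- s * M"] by (simp add: a_def)
  have alb: "s * M - (s*M)^2/2 \<le> a" using exp_neg_quad[of "s*M"] s M by (simp add: a_def)
  have p1: "(\<Sum>v\<in>V. pmf p v) = 1" using sum_pmf_eq_1[OF V sp] .
  have "(\<Sum>v\<in>V. pmf p v * exp (- s * (X v - \<nu>))) = exp (s * \<nu>) * (\<Sum>v\<in>V. pmf p v * exp (- s * X v))"
    by (simp add: sum_distrib_left algebra_simps exp_add[symmetric] exp_diff)
  also have "(\<Sum>v\<in>V. pmf p v * exp (- s * X v)) \<le> (\<Sum>v\<in>V. pmf p v * (1 - X v / M * a))"
    using exp_convex_bound[OF s(1) M] X unfolding a_def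
    by (intro sum_mono mult_left_mono) auto
  also have "\<dots> = 1 - \<mu> * a / M" using p1
    by (simp add: \<mu>_def algebra_simps sum_subtractf sum_distrib_left sum_distrib_right sum_divide_distrib)
  also have "\<dots> \<le> exp (- (\<mu> * a / M))" using exp_ge_add_one_self[of "- (\<mu> * a / M)"] by simp
  also have "\<dots> \<le> exp (- (\<nu> * a / M))" using nu(1) a0 M
    by (simp add: \<mu>_def divide_right_mono mult_right_mono)
  finally have "(\<Sum>v\<in>V. pmf p v * exp (- s * (X v - \<nu>))) \<le> exp (s * \<nu>) * exp (- (\<nu> * a / M))"
    by (simp add: mult_left_mono)
  also have "\<dots> = exp (\<nu> * (s - a / M))" by (simp add: exp_add[symmetric] algebra_simps)
  also have "\<dots> \<le> exp (l^2 * M * K / 2)"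
  proof -
    have g0: "0 \<le> s - a / M" using aub M by (simp add: field_simps)
    have g1: "s - a / M \<le> s^2 * M / 2" using alb M by (simp add: field_simps power2_eq_square)
    have "\<nu> * (s - a / M) \<le> l^2 * M * K / 2"
    proof (cases "\<nu> \<ge> 0")
      case True
      have "\<nu> * (s - a / M) \<le> \<nu> * (s^2 * M / 2)" using True g1 by (rule mult_left_mono[rotated])
      also have "\<dots> \<le> K * (l^2 * M / 2)"
        using True nu(2) s M by (intro mult_mono) (auto intro!: power_mono)
      finally show ?thesis by (simp add: algebra_simps)
    next
      case False
      then have "\<nu> * (s - a / M) \<le> 0" using g0 by (simp add: mult_nonpos_nonneg)
      also have "0 \<le> l^2 * M * K / 2" using M K by simp
      finally show ?thesis .
    qed
    then show ?thesis by simp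
  qed
  finally show ?thesis .
qed

lemma hist_support:
  assumes "valid_strategy V C f B opt x" "n \<le> B" "h \<in> set_pmf (alg_hist x n)"
  shows "length h = n \<and> set h \<subseteq> V"
  using assms(2,3)
proof (induction n arbitrary: h)
  case 0 then show ?case by simp
next
  case (Suc n)
  have "h \<in> (\<Union>h0\<in>set_pmf (alg_hist x n). (\<lambda>v. h0 @ [v]) ` set_pmf (x n h0))"
    using Suc.prems(2) by simp
  then obtain h0 v where h0: "h0 \<in> set_pmf (alg_hist x n)" and v: "v \<in> set_pmf (x n h0)"
    and h: "h = h0 @ [v]" by blast
  have IH: "length h0 = n \<and> set h0 \<subseteq> V" using Suc.IH[OF _ h0] Suc.prems by simp
  have "n < B" using Suc.prems(1) by simp
  with IH assms(1) have "set_pmf (x n h0) \<subseteq> V" unfolding valid_strategy_def by blast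
  then show ?case using IH v h by auto
qed

lemma hist_finite:
  assumes "valid_strategy V C f B opt x" "n \<le> B" "finite V"
  shows "finite (set_pmf (alg_hist x n))"
proof (rule finite_subset)
  show "set_pmf (alg_hist x n) \<subseteq> {h. set h \<subseteq> V \<and> length h = n}"
    using hist_support[OF assms(1,2)] by auto
  show "finite {h. set h \<subseteq> V \<and> length h = n}" using finite_lists_length_eq[OF assms(3)] .
qed

theorem lemma4:
  fixes V :: "'v set" and C :: "'c set" and f :: "'c \<Rightarrow> 'v set \<Rightarrow> real"
    and B :: nat and x :: "nat \<Rightarrow> 'v list \<Rightarrow> 'v pmf" and \<epsilon> :: real and c :: 'c
  assumes "finite V" "V \<noteq> {}" "finite C" "C \<noteq> {}"
    and "\<And>c S. c \<in> C \<Longrightarrow> S \<subseteq> V \<Longrightarrow> f c S \<ge> 0"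
    and "\<And>c. c \<in> C \<Longrightarrow> monotone_set_fun V (f c)"
    and "\<And>c. c \<in> C \<Longrightarrow> submodular V (f c)"
    and "B > 0"
    and "valid_strategy V C f B (OPT V C f B) x"
    and "\<epsilon> > 0"
    and "c \<in> C"
    and "(MAX v\<in>V. marg (f c) {v} {}) > 0"
  shows "measure_pmf.prob (alg_output x B)
           {S. f c S \<le> (1 - 1 / exp 1 - \<epsilon>) * OPT V C f B}
         \<le> exp (- (\<epsilon>\<^sup>2 * OPT V C f B) / (4 * (MAX v\<in>V. marg (f c) {v} {})))"
proof -
  note V = assms(1,2) and valid = assms(9) and cC = assms(11)
  define Op where "Op = OPT V C f B"
  define M where "M = (MAX v\<in>V. marg (f c) {v} {})"
  define F where "F = (\<lambda>h. f c (set h))"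
  define lam where "lam = \<epsilon> / M"
  define q where "q = 1 - 1 / real B"
  define cst where "cst = lam^2 * M * Op / (2 * real B)"
  define \<Phi> where "\<Phi> = (\<lambda>n h. exp (lam * q^(B-n) * (Op - F h) - real n * cst))"
  have M0: "M > 0" using assms(12) by (simp add: M_def)
  have lam0: "lam > 0" using M0 assms(10) by (simp add: lam_def)
  have q01: "0 \<le> q" "q \<le> 1" using assms(8) by (auto simp: q_def field_simps)
  have fnn: "\<And>S. S \<subseteq> V \<Longrightarrow> f c S \<ge> 0" using assms(5) cC by blast
  have O0: "Op \<ge> 0"
  proof -
    have fin: "finite {S. S \<subseteq> V \<and> card S \<le> B}" using V(1) by simp
    have "{} \<in> {S. S \<subseteq> V \<and> card S \<le> B}" by simp
    then have "Min ((\<lambda>c. f c {}) ` C) \<le> Op" unfolding Op_def OPT_def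
      using fin by (intro Max_ge) auto
    moreover have "0 \<le> Min ((\<lambda>c. f c {}) ` C)" using assms(3,4,5) by (subst Min_ge_iff) auto
    ultimately show ?thesis by linarith
  qed
  have Xb: "0 \<le> marg (f c) {v} S \<and> marg (f c) {v} S \<le> M" if "S \<subseteq> V" "v \<in> V" for S v
  proof -
    have mono: "monotone_set_fun V (f c)" and sub: "submodular V (f c)" using assms(6,7) cC by auto
    have "f c S \<le> f c (S \<union> {v})" using mono that unfolding monotone_set_fun_def
      by (metis Un_least Un_upper1 empty_subsetI insert_subset)
    moreover have "f c (S \<union> {v}) + f c (S \<inter> {v}) \<le> f c S + f c {v}"
      using sub that unfolding submodular_def by (metis empty_subsetI insert_subset)
    moreover have "f c {} \<le> f c (S \<inter> {v})" using mono that unfolding monotone_set_fun_def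
      by (meson empty_subsetI inf.coboundedI1)
    moreover have "marg (f c) {v} {} \<le> M" unfolding M_def using V that by (intro Max_ge) auto
    ultimately show ?thesis unfolding marg_def by auto
  qed
  have main: "(\<integral>\<^sup>+h. ennreal (\<Phi> n h) \<partial>alg_hist x n) \<le> ennreal (\<Phi> 0 [])" if "n \<le> B" for n
    using that
  proof (induction n)
    case 0 then show ?case by simp
  next
    case (Suc n)
    have nB: "n < B" using Suc.prems by simp
    have "(\<integral>\<^sup>+h. ennreal (\<Phi> (Suc n) h) \<partial>alg_hist x (Suc n))
          = (\<integral>\<^sup>+h. (\<integral>\<^sup>+v. ennreal (\<Phi> (Suc n) (h @ [v])) \<partial>x n h) \<partial>alg_hist x n)"
      by simp
    also have "\<dots> \<le> (\<integral>\<^sup>+h. ennreal (\<Phi> n h) \<partial>alg_hist x n)"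
    proof (rule nn_integral_mono_AE, rule AE_pmfI)
      fix h assume hs: "h \<in> set_pmf (alg_hist x n)"
      have hl: "length h = n" "set h \<subseteq> V" using hist_support[OF valid _ hs] nB by auto
      have spx: "set_pmf (x n h) \<subseteq> V" and cov: "(\<Sum>v\<in>V. pmf (x n h) v * marg (f c) {v} (set h)) \<ge> (Op - F h) / real B"
        using valid nB hl cC unfolding valid_strategy_def Op_def F_def by auto
      define X where "X = (\<lambda>v. marg (f c) {v} (set h))"
      define w where "w = q ^ (B - Suc n)"
      define \<nu> where "\<nu> = (Op - F h) / real B"
      define A where "A = lam * q^(B-n) * (Op - F h) - real n * cst"
      have w01: "0 \<le> w" "w \<le> 1" using q01 by (auto simp: w_def power_le_one)
      have qw: "q^(B-n) = q * w" using nB by (simp add: w_def Suc_diff_Suc[symmetric])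
      have eq: "\<Phi> (Suc n) (h @ [v]) = exp A * exp (- cst) * exp (- (lam * w) * (X v - \<nu>))" for v
      proof -
        have "F (h @ [v]) = F h + X v" by (simp add: F_def X_def marg_def Un_commute)
        then have "\<Phi> (Suc n) (h @ [v]) = exp (lam * w * (Op - F h - X v) - (real n + 1) * cst)"
          by (simp add: \<Phi>_def w_def algebra_simps)
        also have "lam * w * (Op - F h - X v) - (real n + 1) * cst
             = A + (- cst) + (- (lam * w) * (X v - \<nu>))"
          unfolding A_def qw \<nu>_def using assms(8) by (simp add: q_def field_simps)
        finally show ?thesis by (simp only: exp_add[symmetric])
      qed
      have int: "(\<integral>\<^sup>+v. ennreal (\<Phi> (Suc n) (h @ [v])) \<partial>x n h)
               = ennreal (\<Sum>v\<in>V. \<Phi> (Suc n) (h @ [v]) * pmf (x n h) v)"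
      proof -
        have fx: "finite (set_pmf (x n h))" using spx V(1) finite_subset by blast
        have "(\<integral>\<^sup>+v. ennreal (\<Phi> (Suc n) (h @ [v])) \<partial>x n h) = ennreal (\<integral>v. \<Phi> (Suc n) (h @ [v]) \<partial>x n h)"
          by (rule nn_integral_eq_integral) (auto simp: integrable_measure_pmf_finite[OF fx] \<Phi>_def)
        also have "(\<integral>v. \<Phi> (Suc n) (h @ [v]) \<partial>x n h) = (\<Sum>v\<in>V. \<Phi> (Suc n) (h @ [v]) * pmf (x n h) v)"
          using spx V(1) by (intro integral_measure_pmf_real) auto
        finally show ?thesis .
      qed
      have "(\<Sum>v\<in>V. \<Phi> (Suc n) (h @ [v]) * pmf (x n h) v)
            = exp A * exp (- cst) * (\<Sum>v\<in>V. pmf (x n h) v * exp (- (lam * w) * (X v - \<nu>)))"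
        by (simp add: eq sum_distrib_left algebra_simps)
      also have "\<dots> \<le> exp A * exp (- cst) * exp (lam^2 * M * (Op / real B) / 2)"
        apply (intro mult_left_mono step_bound[OF V(1) spx])
        using Xb hl cov M0 O0 w01 lam0 by (auto simp: X_def \<nu>_def F_def fnn
          intro!: divide_right_mono mult_nonneg_nonneg mult_left_le)
      also have "\<dots> = \<Phi> n h"
        by (simp add: A_def \<Phi>_def cst_def exp_add[symmetric])
      finally show "(\<integral>\<^sup>+v. ennreal (\<Phi> (Suc n) (h @ [v])) \<partial>x n h) \<le> ennreal (\<Phi> n h)"
        using int by (simp add: ennreal_leI)
    qed
    also have "\<dots> \<le> ennreal (\<Phi> 0 [])" using Suc by simp
    finally show ?case .
  qed
  have mB: "(\<integral>\<^sup>+h. ennreal (\<Phi> B h) \<partial>alg_hist x B) \<le> ennreal (\<Phi> 0 [])" using main by simp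
  define \<tau> where "\<tau> = 1 - 1 / exp 1 - \<epsilon>"
  define E where "E = {S. f c S \<le> \<tau> * Op}"
  define k where "k = exp (real B * cst - lam * ((1 - \<tau>) * Op))"
  have ind: "indicator (set -` E) h \<le> ennreal (\<Phi> B h * k)" if "h \<in> set_pmf (alg_hist x B)" for h
  proof (cases "set h \<in> E")
    case True
    then have "F h \<le> \<tau> * Op" by (simp add: E_def F_def)
    then have "0 \<le> lam * (\<tau> * Op - F h)" using lam0 by simp
    then have "1 \<le> exp (lam * (\<tau> * Op - F h))" by simp
    also have "exp (lam * (\<tau> * Op - F h)) = \<Phi> B h * k"
      by (simp add: \<Phi>_def k_def exp_add[symmetric] algebra_simps)
    finally show ?thesis using True by (simp add: indicator_def)
  next
    case False then show ?thesis by (simp add: indicator_def \<Phi>_def k_def)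
  qed
  have "emeasure (measure_pmf (alg_hist x B)) (set -` E) = (\<integral>\<^sup>+h. indicator (set -` E) h \<partial>alg_hist x B)"
    by simp
  also have "\<dots> \<le> (\<integral>\<^sup>+h. ennreal (\<Phi> B h) * ennreal k \<partial>alg_hist x B)"
    using ind by (intro nn_integral_mono_AE AE_pmfI) (simp add: \<Phi>_def k_def ennreal_mult)
  also have "\<dots> = (\<integral>\<^sup>+h. ennreal (\<Phi> B h) \<partial>alg_hist x B) * ennreal k"
    by (rule nn_integral_multc) simp
  also have "\<dots> \<le> ennreal (\<Phi> 0 []) * ennreal k" using mB by (rule mult_right_mono) simp
  also have "\<dots> = ennreal (\<Phi> 0 [] * k)" by (simp add: \<Phi>_def k_def ennreal_mult)
  finally have P: "measure (measure_pmf (alg_hist x B)) (set -` E) \<le> \<Phi> 0 [] * k"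
    by (simp add: measure_pmf.emeasure_eq_measure \<Phi>_def k_def)
  have real: "\<Phi> 0 [] * k \<le> exp (- (\<epsilon>\<^sup>2 * Op) / (4 * M))"
  proof -
    define D where "D = Op - f c {}"
    have D: "D \<le> Op" using fnn[of "{}"] by (simp add: D_def)
    have qB: "q ^ B \<le> exp (-1)" using q_pow[OF assms(8)] by (simp add: q_def)
    have qD: "q ^ B * D \<le> exp (-1) * Op"
    proof (cases "D \<ge> 0")
      case True
      then have "q ^ B * D \<le> exp (-1) * D" using qB by (rule mult_right_mono[rotated])
      also have "\<dots> \<le> exp (-1) * Op" using D by simp
      finally show ?thesis .
    next
      case False
      then have "q ^ B * D \<le> 0" using q01 by (simp add: mult_nonneg_nonpos)
      also have "0 \<le> exp (-1) * Op" using O0 by simp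
      finally show ?thesis .
    qed
    have Bc: "real B * cst = lam^2 * M * Op / 2" using assms(8) by (simp add: cst_def)
    have e1: "1 / exp 1 = exp (-1::real)" by (simp add: exp_minus field_simps)
    have "\<Phi> 0 [] * k = exp (lam * (q^B * D) + real B * cst - lam * ((1 - \<tau>) * Op))"
      by (simp add: \<Phi>_def k_def F_def D_def exp_add[symmetric])
    also have "\<dots> \<le> exp (lam * (exp (-1) * Op) + lam^2 * M * Op / 2 - lam * ((exp (-1) + \<epsilon>) * Op))"
      using qD lam0 unfolding Bc \<tau>_def e1 by (simp add: mult_left_mono)
    also have "lam * (exp (-1) * Op) + lam^2 * M * Op / 2 - lam * ((exp (-1) + \<epsilon>) * Op)
        = - (\<epsilon>\<^sup>2 * Op) / (2 * M)"
      using M0 by (simp add: lam_def field_simps power2_eq_square)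
    also have "- (\<epsilon>\<^sup>2 * Op) / (2 * M) \<le> - (\<epsilon>\<^sup>2 * Op) / (4 * M)"
      using M0 O0 by (simp add: field_simps)
    finally show ?thesis by simp
  qed
  show ?thesis using P real
    by (simp add: alg_output_def E_def \<tau>_def Op_def M_def)
qed

end
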